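(* Let $W$ be an sc-Banach space, $E=\mathbb R^n\oplus W$, $C=[0,\infty)^n\oplus W$, identify $W$ with $\{0\}\oplus W$, and let $N$ be a finite-dimensional subspace of $E$ in good position to $C$. Let $\Sigma=\bigcup_{a\in C\cap N,\,a\neq0}\sigma_a$, $\Sigma^c=\{1,\dots,n\}\setminus\Sigma$, and let $\widetilde N$ be an algebraic complement of $N\cap W$ in $N$. Then either $\widetilde N\cap(\mathbb R^{\Sigma^c}\oplus W)=\{0\}$ or $\widetilde N\subset\mathbb R^{\Sigma^c}\oplus W$; in the second case $\dim\widetilde N=1$ and $\Sigma=\emptyset$.
   Context: An sc-Banach space is a Banach space $W$ with nested Banach spaces $W=W_0\supset W_1\supset\cdots$, compact inclusions $W_n\to W_m$ ($m<n$), $\bigcap W_m$ dense in each $W_m$; $E$ has levels $\mathbb R^n\oplus W_m$ and $\|\cdot\|$ is its level-$0$ norm. For $a=(a_1,\dots,a_n,a_\infty)\in C$, $\sigma_a=\{i\in\{1,\dots,n\}: a_i=0\}$; for $S\subset\{1,\dots,n\}$, $\mathbb R^S=\{x\in\mathbb R^n:x_j=0\text{ for } j\notin S\}$. An sc-complement of $N$ is a closed subspace $N^\perp$ with $E_m=(N\cap E_m)\oplus(N^\perp\cap E_m)$ topologically for all $m$, both sc-subspaces. $N$ is in good position to $C$ if $N\cap C$ has nonempty interior in $N$ and there exist an sc-complement $N^\perp$ and $c>0$ such that for every $(n,m)\in N\oplus N^\perp$ with $\|m\|\le c\|n\|$: $n+m\in C$ iff $n\in C$. *)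

theory Defs
  imports "HOL-Analysis.Analysis"
begin

definition is_norm_on :: "'w::real_vector set \<Rightarrow> ('w \<Rightarrow> real) \<Rightarrow> bool" where
  "is_norm_on V p \<longleftrightarrow>
     (\<forall>x\<in>V. p x \<ge> 0 \<and> (p x = 0 \<longleftrightarrow> x = 0)) \<and>
     (\<forall>x\<in>V. \<forall>y\<in>V. p (x + y) \<le> p x + p y) \<and>
     (\<forall>x\<in>V. \<forall>r::real. p (r *\<^sub>R x) = \<bar>r\<bar> * p x)"

definition sc_structure :: "(nat \<Rightarrow> 'w::banach set) \<Rightarrow> (nat \<Rightarrow> 'w \<Rightarrow> real) \<Rightarrow> bool" where
  "sc_structure Wl nw \<longleftrightarrow>
     Wl 0 = UNIV \<and> nw 0 = norm \<and>
     (\<forall>m. subspace (Wl m) \<and> is_norm_on (Wl m) (nw m)) \<and>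
     (\<forall>m. \<forall>X::nat \<Rightarrow> 'w. (\<forall>k. X k \<in> Wl m) \<longrightarrow>
          (\<forall>e>0. \<exists>K. \<forall>i\<ge>K. \<forall>j\<ge>K. nw m (X i - X j) < e) \<longrightarrow>
          (\<exists>L\<in>Wl m. (\<lambda>k. nw m (X k - L)) \<longlonglongrightarrow> 0)) \<and>
     (\<forall>m. Wl (Suc m) \<subseteq> Wl m) \<and>
     (\<forall>m k. m < k \<longrightarrow> (\<forall>(X::nat \<Rightarrow> 'w) B. (\<forall>i. X i \<in> Wl k \<and> nw k (X i) \<le> B) \<longrightarrow>
          (\<exists>r L. strict_mono r \<and> L \<in> Wl m \<and> (\<lambda>i. nw m (X (r i) - L)) \<longlonglongrightarrow> 0))) \<and>
     (\<forall>m. \<forall>x\<in>Wl m. \<forall>e>0. \<exists>y\<in>(\<Inter>k. Wl k). nw m (x - y) < e)"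

text \<open>E = R^n (+) W is modelled as the product type (real^'n) \<times> 'w;
 its levels are E_m = R^n (+) W_m with level norm |x| + nw m w.\<close>

definition E_level :: "(nat \<Rightarrow> 'w set) \<Rightarrow> nat \<Rightarrow> ((real^'n) \<times> 'w) set" where
  "E_level Wl m = UNIV \<times> Wl m"

definition E_norm :: "(nat \<Rightarrow> 'w \<Rightarrow> real) \<Rightarrow> nat \<Rightarrow> ((real^'n) \<times> 'w::real_normed_vector) \<Rightarrow> real" where
  "E_norm nw m z = norm (fst z) + nw m (snd z)"

text \<open>sc-subspace: closed linear subspace F with F \<inter> E_\<infinity> dense in each F \<inter> E_m
 (so that the induced filtration is again an sc-structure).\<close>

definition sc_subspace :: "(nat \<Rightarrow> 'w::banach set) \<Rightarrow> (nat \<Rightarrow> 'w \<Rightarrow> real) \<Rightarrow> ((real^'n) \<times> 'w) set \<Rightarrow> bool" where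
  "sc_subspace Wl nw F \<longleftrightarrow> subspace F \<and> closed F \<and>
     (\<forall>m. \<forall>x\<in>F \<inter> E_level Wl m. \<forall>e>0.
        \<exists>y\<in>F \<inter> (\<Inter>k. E_level Wl k). E_norm nw m (x - y) < e)"

text \<open>sc-complement Np of N: closed subspace with E_m = (N \<inter> E_m) (+) (Np \<inter> E_m)
 topologically (direct sum with bounded projection) for all m; both sc-subspaces.\<close>

definition sc_complement :: "(nat \<Rightarrow> 'w::banach set) \<Rightarrow> (nat \<Rightarrow> 'w \<Rightarrow> real) \<Rightarrow> ((real^'n) \<times> 'w) set \<Rightarrow> ((real^'n) \<times> 'w) set \<Rightarrow> bool" where
  "sc_complement Wl nw N Np \<longleftrightarrow>
     sc_subspace Wl nw N \<and> sc_subspace Wl nw Np \<and> N \<inter> Np = {0} \<and>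
     (\<forall>m. (\<forall>z\<in>E_level Wl m. \<exists>a\<in>N \<inter> E_level Wl m. \<exists>b\<in>Np \<inter> E_level Wl m. z = a + b) \<and>
          (\<exists>K>0. \<forall>a\<in>N \<inter> E_level Wl m. \<forall>b\<in>Np \<inter> E_level Wl m.
              E_norm nw m a \<le> K * E_norm nw m (a + b)))"

definition quadrant :: "((real^'n) \<times> 'w) set" where
  "quadrant = {z. \<forall>i. fst z $ i \<ge> 0}"

definition good_position :: "(nat \<Rightarrow> 'w::banach set) \<Rightarrow> (nat \<Rightarrow> 'w \<Rightarrow> real) \<Rightarrow> ((real^'n) \<times> 'w) set \<Rightarrow> ((real^'n) \<times> 'w) set \<Rightarrow> bool" where
  "good_position Wl nw C N \<longleftrightarrow>
     (\<exists>U. openin (top_of_set N) U \<and> U \<noteq> {} \<and> U \<subseteq> N \<inter> C) \<and>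
     (\<exists>Np c. sc_complement Wl nw N Np \<and> c > 0 \<and>
        (\<forall>a\<in>N. \<forall>b\<in>Np. norm b \<le> c * norm a \<longrightarrow> (a + b \<in> C \<longleftrightarrow> a \<in> C)))"

definition sigma_set :: "((real^'n) \<times> 'w) \<Rightarrow> 'n set" where
  "sigma_set a = {i. fst a $ i = 0}"

definition coord_sub :: "'n set \<Rightarrow> ((real^'n) \<times> 'w) set" where
  "coord_sub S = {z. \<forall>j. j \<notin> S \<longrightarrow> fst z $ j = 0}"

definition W_part :: "((real^'n) \<times> 'w::zero) set" where
  "W_part = {z. fst z = 0}"

end

theory Submission
  imports Defs
begin

theorem lemma6p9:
  fixes Wl :: "nat \<Rightarrow> 'w::banach set" and nw :: "nat \<Rightarrow> 'w \<Rightarrow> real"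
    and N Nt :: "((real^'n) \<times> 'w) set"
  assumes "sc_structure Wl nw"
    and "subspace N" and "\<exists>B. finite B \<and> span B = N"
    and "good_position Wl nw quadrant N"
    and "subspace Nt" and "Nt \<subseteq> N" and "Nt \<inter> (N \<inter> W_part) = {0}"
    and "\<forall>z\<in>N. \<exists>a\<in>Nt. \<exists>b\<in>N \<inter> W_part. z = a + b"
  defines "Sig \<equiv> \<Union>{sigma_set a | a. a \<in> quadrant \<inter> N \<and> a \<noteq> 0}"
  shows "Nt \<inter> coord_sub (- Sig) = {0} \<or>
         (Nt \<subseteq> coord_sub (- Sig) \<and> dim Nt = 1 \<and> Sig = {})"
proof (cases "Nt \<inter> coord_sub (- Sig) = {0}")
  case True then show ?thesis by blast
next
  case False
  have "0 \<in> Nt \<inter> coord_sub (- Sig)"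
    using assms(5) by (simp add: subspace_0 coord_sub_def)
  with False obtain z where z: "z \<in> Nt" "z \<noteq> 0" "z \<in> coord_sub (- Sig)" by blast
  have zSig: "fst z $ j = 0" if "j \<in> Sig" for j
    using z(3) that by (auto simp: coord_sub_def)
  have zN: "z \<in> N" using z assms(6) by blast
  have fz: "fst z \<noteq> 0"
  proof
    assume "fst z = 0"
    then have "z \<in> Nt \<inter> (N \<inter> W_part)" using z zN by (simp add: W_part_def)
    with assms(7) z(2) show False by blast
  qed
  then obtain k1 where k1: "fst z $ k1 \<noteq> 0" by (metis vec_eq_iff zero_index)
  obtain d where d: "d = z \<or> d = - z" and dk: "fst d $ k1 < 0"
  proof (cases "fst z $ k1 < 0")
    case True then show ?thesis using that[of z] by simp
  next
    case False then show ?thesis using that[of "-z"] k1 by simp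
  qed
  have dN: "d \<in> N" using d zN assms(2) by (auto intro: subspace_neg)
  have dspan: "d \<in> span {z}" using d by (auto intro: span_base span_neg)
  have dnz: "fst d $ i \<noteq> 0 \<Longrightarrow> fst z $ i \<noteq> 0" for i using d by auto
  have key: "a \<in> span {z}" if aq: "a \<in> quadrant" and aN: "a \<in> N" for a
  proof (cases "a = 0")
    case True then show ?thesis by (simp add: span_zero)
  next
    case anz: False
    define I where "I = {i. fst d $ i < 0}"
    have fI: "finite I" by simp
    have k1I: "k1 \<in> I" using dk I_def by simp
    define f where "f = (\<lambda>i. fst a $ i / (- (fst d $ i)))"
    define t where "t = Min (f ` I)"
    have "t \<in> f ` I" unfolding t_def using fI k1I by (intro Min_in) auto
    then obtain k where kI: "k \<in> I" and tk: "t = f k" by blast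
    have a0: "fst a $ i \<ge> 0" for i using aq by (simp add: quadrant_def)
    have tle: "t \<le> f i" if "i \<in> I" for i unfolding t_def using fI that by simp
    have t0: "t \<ge> 0" using tk kI a0[of k] by (simp add: f_def I_def divide_nonneg_neg)
    define p where "p = a + t *\<^sub>R d"
    have pN: "p \<in> N" unfolding p_def using aN dN assms(2)
      by (simp add: subspace_add subspace_scale)
    have pq: "p \<in> quadrant"
      unfolding quadrant_def
    proof (clarify)
      fix i
      show "0 \<le> fst p $ i"
      proof (cases "i \<in> I")
        case True
        then have di: "fst d $ i < 0" by (simp add: I_def)
        have "t \<le> fst a $ i / (- fst d $ i)" using tle[OF True] by (simp add: f_def)
        moreover have "- fst d $ i > 0" using di by simp
        ultimately have "t * (- fst d $ i) \<le> fst a $ i" by (metis pos_le_divide_eq)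
        then show ?thesis by (simp add: p_def)
      next
        case False
        then have "fst d $ i \<ge> 0" by (simp add: I_def)
        then show ?thesis using t0 a0[of i] by (simp add: p_def)
      qed
    qed
    have dk0: "fst d $ k < 0" using kI by (simp add: I_def)
    have pk: "fst p $ k = 0" using dk0 tk by (simp add: p_def f_def field_simps)
    have kS: "k \<notin> Sig" using zSig[of k] dnz[of k] dk0 by auto
    have "p = 0"
    proof (rule ccontr)
      assume "p \<noteq> 0"
      then have "sigma_set p \<subseteq> Sig" using pq pN unfolding Sig_def by blast
      moreover have "k \<in> sigma_set p" using pk by (simp add: sigma_set_def)
      ultimately show False using kS by blast
    qed
    moreover have "a = p - t *\<^sub>R d" by (simp add: p_def)
    ultimately have "a = - (t *\<^sub>R d)" by simp
    then show ?thesis using dspan by (simp add: span_scale span_neg)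
  qed
  from assms(4) obtain U where U: "openin (top_of_set N) U" "U \<noteq> {}" "U \<subseteq> N \<inter> quadrant"
    and gp: "\<exists>Np c. sc_complement Wl nw N Np \<and> c > 0 \<and>
        (\<forall>a\<in>N. \<forall>b\<in>Np. norm b \<le> c * norm a \<longrightarrow> (a + b \<in> quadrant \<longleftrightarrow> a \<in> quadrant))"
    unfolding good_position_def by blast
  obtain u where uU: "u \<in> U" using U(2) by blast
  obtain e where e0: "e > 0" and eb: "ball u e \<inter> N \<subseteq> U"
    using U(1) uU unfolding openin_contains_ball by blast
  have e: "e > 0" "\<And>y. y \<in> N \<Longrightarrow> dist y u < e \<Longrightarrow> y \<in> U"
    using e0 apply blast using eb by (auto simp: dist_commute)
  have Nsub: "N \<subseteq> span {z}"
  proof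
    fix v assume vN: "v \<in> N"
    show "v \<in> span {z}"
    proof (cases "v = 0")
      case True then show ?thesis by (simp add: span_zero)
    next
      case False
      define r where "r = e / 2 / norm v"
      have r0: "r > 0" using False e by (simp add: r_def)
      have uN: "u \<in> N" using uU U(3) by blast
      have yN: "u + r *\<^sub>R v \<in> N" using uN vN assms(2) by (simp add: subspace_add subspace_scale)
      have "dist (u + r *\<^sub>R v) u = r * norm v" using r0 by (simp add: dist_norm)
      also have "\<dots> = e/2" using False by (simp add: r_def)
      also have "\<dots> < e" using e by simp
      finally have "u + r *\<^sub>R v \<in> U" using e(2) yN by blast
      then have s1: "u + r *\<^sub>R v \<in> span {z}" using key U(3) by blast
      have s2: "u \<in> span {z}" using key U(3) uU by blast
      have "r *\<^sub>R v \<in> span {z}" using span_diff[OF s1 s2] by simp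
      then have "(1/r) *\<^sub>R (r *\<^sub>R v) \<in> span {z}" by (rule span_scale)
      then show ?thesis using r0 by simp
    qed
  qed
  have spanNt: "span {z} \<subseteq> Nt" using z(1) assms(5) by (simp add: span_minimal)
  have NtEq: "Nt = span {z}" using spanNt Nsub assms(6) by blast
  have spanz_coord: "fst y $ j = 0" if "y \<in> span {z}" "fst z $ j = 0" for y j
    using that by (auto simp: span_singleton)
  have sub: "Nt \<subseteq> coord_sub (- Sig)"
  proof
    fix y assume "y \<in> Nt"
    then have ys: "y \<in> span {z}" using NtEq by simp
    show "y \<in> coord_sub (- Sig)" unfolding coord_sub_def
      using spanz_coord[OF ys zSig] by simp
  qed
  have dim1: "dim Nt = 1"
    unfolding NtEq dim_span using z(2) by (simp add: dim_eq_card_independent)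
  have SigE: "Sig = {}"
  proof (rule ccontr)
    assume "Sig \<noteq> {}"
    then obtain j where jS: "j \<in> Sig" by blast
    then obtain a where aq: "a \<in> quadrant" and aN: "a \<in> N" and anz: "a \<noteq> 0"
      unfolding Sig_def by blast
    have aj: "fst a $ j = 0" using spanz_coord[OF _ zSig[OF jS]] aN Nsub by blast
    from gp obtain Np c where cmp: "sc_complement Wl nw N Np" and c: "c > 0"
      and gpc: "\<forall>a\<in>N. \<forall>b\<in>Np. norm b \<le> c * norm a \<longrightarrow> (a + b \<in> quadrant \<longleftrightarrow> a \<in> quadrant)"
      by blast
    have W0: "Wl 0 = UNIV" using assms(1) by (simp add: sc_structure_def)
    have subNp: "subspace Np" using cmp by (simp add: sc_complement_def sc_subspace_def)
    define x :: "(real^'n) \<times> 'w" where "x = ((\<chi> i. if i = j then -1 else 0), 0)"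
    have "x \<in> E_level Wl 0" by (simp add: E_level_def W0)
    then obtain n b where nN: "n \<in> N" and bNp: "b \<in> Np" and xnb: "x = n + b"
      using cmp unfolding sc_complement_def by blast
    have nj: "fst n $ j = 0" using spanz_coord[OF _ zSig[OF jS]] nN Nsub by blast
    have bj: "fst b $ j = -1"
      proof -
      have "fst x $ j = fst n $ j + fst b $ j" using xnb by simp
      then show ?thesis using nj by (simp add: x_def)
    qed
    then have bnz: "b \<noteq> 0" by auto
    define dl where "dl = c * norm a / norm b"
    have dl0: "dl > 0" using c anz bnz by (simp add: dl_def)
    have "dl *\<^sub>R b \<in> Np" using subNp bNp by (simp add: subspace_scale)
    moreover have "norm (dl *\<^sub>R b) \<le> c * norm a" using dl0 bnz c by (simp add: dl_def)
    ultimately have "a + dl *\<^sub>R b \<in> quadrant" using gpc aN aq by blast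
    then have "fst (a + dl *\<^sub>R b) $ j \<ge> 0" by (simp add: quadrant_def)
    then show False using aj bj dl0 by simp
  qed
  show ?thesis using sub dim1 SigE by blast
qed

end
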